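(* For every two-way linear $\mathrm{HTA}_\pm$ $\mathcal{A}=\langle Q,\Sigma,\delta,q_I,F\rangle$ over $\Sigma=2^{AP}$ there is a $\mathrm{PastCTL}_\pm$ formula $\varphi_{\mathcal{A}}$ such that $\mathcal{L}(\mathcal{A})=\mathcal{L}(\varphi_{\mathcal{A}})$.
   Context: Fix a finite set $AP$, $\Sigma=2^{AP}$. A $\Sigma$-tree is an unranked (finitely many children per node), unordered, leafless (every node has a child) tree with labelling $t(v)\in\Sigma$. $\mathrm{PastCTL}_\pm$ formulae: $\varphi ::= p\mid\neg\varphi\mid\varphi\lor\varphi\mid\mathsf{D}^n\varphi\mid\mathsf{E}\mathsf{X}\varphi\mid\mathsf{E}(\varphi\,\mathsf{U}\,\varphi)\mid\mathsf{E}\mathsf{Y}\varphi\mid\mathsf{E}(\varphi\,\mathsf{S}\,\varphi)$, evaluated at a node $u$ of $t$: $p$ iff $p\in t(u)$; Booleans as usual; $\mathsf{D}^n\varphi$ iff $u$ has at least $n$ distinct children satisfying $\varphi$; $\mathsf{E}\mathsf{X}\varphi$ iff some child of $u$ satisfies $\varphi$; $\mathsf{E}(\varphi_1\mathsf{U}\varphi_2)$ iff there is a path $u=v_0,v_1,\dots,v_j$ ($j\ge0$, each $v_{k+1}$ a child of $v_k$) with $v_j\models\varphi_2$ and $v_k\models\varphi_1$ for $k<j$; $\mathsf{E}\mathsf{Y}\varphi$ iff $u$ is not the root and its parent satisfies $\varphi$; $\mathsf{E}(\varphi_1\mathsf{S}\varphi_2)$ iff there is $j\ge0$ such that, writing $w_0=u$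 and $w_{k+1}$ the parent of $w_k$ (all existing), $w_j\models\varphi_2$ and $w_k\models\varphi_1$ for $k<j$. $\mathcal{L}(\varphi)$ is the set of trees whose root satisfies $\varphi$. Positive Boolean formulae $\mathcal{B}^+(X)$: built from $\top,\bot$ and elements of $X$ by $\land,\lor$. A two-way $\mathrm{HTA}_\pm$ is $\mathcal{A}=\langle Q,\Sigma,\delta,q_I,F\rangle$ with $Q$ finite, $q_I\in Q$, $F\subseteq Q$ and $\delta:Q\times\Sigma\times\{\mathit{root},\mathit{nonroot}\}\to\mathcal{B}^+(\{\Diamond_k,\Box_k\}_{k\in\mathbb{N}}\times Q\ \cup\ \{\Uparrow\}\times Q)$; write $\Diamond=\Diamond_1$, $\Box=\Box_1$. A run on $t$ from node $s$ is a tree $r$ labelled by $Q\times\mathrm{Dom}(t)$ whose root is labelled $(q_I,s)$ and each node $x$ labelled $(q,v)$ satisfies $\delta(q,t(v),\rho)$, $\rho=\mathit{root}$ iff $v$ is the root of $t$, where: $x\models(\Diamond_k,q')$ iff $x$ has children labelled $(q',v_1),\dots,(q',v_k)$ with $v_1,\dots,v_k$ pairwise distinct children of $v$; $x\models(\Box_k,q')$ iff for all but at most $k-1$ children $v'$ of $v$, $x$ has a child labelled $(q',v')$; $x\models(\Uparrow,q')$ iff $x$ has a child labelled $(q',v')$ with $v'$ the parent of $v$ in $t$; $\top,\bot,\land,\lor$ as usual. A run is accepting if every infinite path in $r$ from its root has infinitely many nodes with state in $F$. $\mathcal{L}(\mathcal{A})$ is the set of trees with an accepting run from the root. Hesitant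 structure: $Q$ is partitioned into nonempty components $Q_1,\dots,Q_n$, totally ordered so that if $q\in Q_i$ and $q'\in Q_j$ occurs in an atom of some $\delta(q,\sigma,\rho)$ then $j\le i$; each component is of exactly one type (a $Q_i$-atom is an atom whose state is in $Q_i$): transient (no $Q_i$-atom in $\delta(q,\sigma,\rho)$ for $q\in Q_i$); existential (all such $Q_i$-atoms have the form $(\Diamond,q')$ and each clause of the disjunctive normal form of $\delta(q,\sigma,\rho)$ has at most one $Q_i$-atom); universal (all such $Q_i$-atoms have the form $(\Box,q')$ and each clause of the conjunctive normal form has at most one $Q_i$-atom); upward (for a singleton $\{q\}$: $q$ occurs in $\delta(q,\sigma,\rho)$ only in atoms $(\Uparrow,q)$). Polarised: states of existential components are not in $F$ and states of universal components are in $F$. Linear: every component is a singleton. *)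

theory Defs
  imports Main
begin

text \<open>Nodes are represented as lists of naturals (the root is the empty list, the
  children of v are the nodes v @ [i]); the order of children is irrelevant to all
  notions below, so this represents unordered trees.\<close>

record 'ap stree =
  tdom :: "nat list set"
  tlab :: "nat list \<Rightarrow> 'ap set"

definition tchildren :: "'ap stree \<Rightarrow> nat list \<Rightarrow> nat list set" where
  "tchildren T v = {w \<in> tdom T. \<exists>i. w = v @ [i]}"

definition wf_tree :: "'ap stree \<Rightarrow> bool" where
  "wf_tree T \<longleftrightarrow> [] \<in> tdom T
     \<and> (\<forall>v i. v @ [i] \<in> tdom T \<longrightarrow> v \<in> tdom T)
     \<and> (\<forall>v \<in> tdom T. finite (tchildren T v) \<and> tchildren T v \<noteq> {})"

datatype 'ap pctl =
    Prop 'ap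
  | Neg "'ap pctl"
  | Or "'ap pctl" "'ap pctl"
  | Dn nat "'ap pctl"
  | EXn "'ap pctl"
  | EU "'ap pctl" "'ap pctl"
  | EY "'ap pctl"
  | ES "'ap pctl" "'ap pctl"

text \<open>Parent of a (non-root) node u is butlast u; the k-th ancestor of u is
  take (length u - k) u.\<close>

fun sat :: "'ap stree \<Rightarrow> nat list \<Rightarrow> 'ap pctl \<Rightarrow> bool" where
  "sat T u (Prop p) = (p \<in> tlab T u)"
| "sat T u (Neg \<phi>) = (\<not> sat T u \<phi>)"
| "sat T u (Or \<phi> \<psi>) = (sat T u \<phi> \<or> sat T u \<psi>)"
| "sat T u (Dn n \<phi>) = (n \<le> card {c \<in> tchildren T u. sat T c \<phi>})"
| "sat T u (EXn \<phi>) = (\<exists>c \<in> tchildren T u. sat T c \<phi>)"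
| "sat T u (EU \<phi> \<psi>) = (\<exists>(f :: nat \<Rightarrow> nat list) j. f 0 = u
      \<and> (\<forall>k<j. f (Suc k) \<in> tchildren T (f k))
      \<and> sat T (f j) \<psi> \<and> (\<forall>k<j. sat T (f k) \<phi>))"
| "sat T u (EY \<phi>) = (u \<noteq> [] \<and> sat T (butlast u) \<phi>)"
| "sat T u (ES \<phi> \<psi>) = (\<exists>j \<le> length u. sat T (take (length u - j) u) \<psi>
      \<and> (\<forall>k<j. sat T (take (length u - k) u) \<phi>))"

definition ctl_lang :: "'ap pctl \<Rightarrow> 'ap stree set" where
  "ctl_lang \<phi> = {T. wf_tree T \<and> sat T [] \<phi>}"

datatype 'a pbf = PTrue | PFalse | PAtom 'a | PAnd "'a pbf" "'a pbf" | POr "'a pbf" "'a pbf"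

fun pbf_sat :: "('a \<Rightarrow> bool) \<Rightarrow> 'a pbf \<Rightarrow> bool" where
  "pbf_sat I PTrue = True"
| "pbf_sat I PFalse = False"
| "pbf_sat I (PAtom a) = I a"
| "pbf_sat I (PAnd f g) = (pbf_sat I f \<and> pbf_sat I g)"
| "pbf_sat I (POr f g) = (pbf_sat I f \<or> pbf_sat I g)"

fun pbf_atoms :: "'a pbf \<Rightarrow> 'a set" where
  "pbf_atoms PTrue = {}"
| "pbf_atoms PFalse = {}"
| "pbf_atoms (PAtom a) = {a}"
| "pbf_atoms (PAnd f g) = pbf_atoms f \<union> pbf_atoms g"
| "pbf_atoms (POr f g) = pbf_atoms f \<union> pbf_atoms g"

text \<open>Disjunctive / conjunctive normal form, as sets of clauses (sets of atoms).\<close>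

fun dnf :: "'a pbf \<Rightarrow> 'a set set" where
  "dnf PTrue = {{}}"
| "dnf PFalse = {}"
| "dnf (PAtom a) = {{a}}"
| "dnf (POr f g) = dnf f \<union> dnf g"
| "dnf (PAnd f g) = {c \<union> d | c d. c \<in> dnf f \<and> d \<in> dnf g}"

fun cnf :: "'a pbf \<Rightarrow> 'a set set" where
  "cnf PTrue = {}"
| "cnf PFalse = {{}}"
| "cnf (PAtom a) = {{a}}"
| "cnf (PAnd f g) = cnf f \<union> cnf g"
| "cnf (POr f g) = {c \<union> d | c d. c \<in> cnf f \<and> d \<in> cnf g}"

datatype 'q atom = Dia nat 'q | Box nat 'q | Up 'q

fun atom_state :: "'q atom \<Rightarrow> 'q" where
  "atom_state (Dia k q) = q"
| "atom_state (Box k q) = q"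
| "atom_state (Up q) = q"

text \<open>The state set Q is the finite type 'q; the boolean argument of delta is
  True iff the current node is the root.\<close>

record ('ap, 'q) hta =
  delta :: "'q \<Rightarrow> 'ap set \<Rightarrow> bool \<Rightarrow> 'q atom pbf"
  init :: 'q
  acc :: "'q set"

definition rchildren :: "nat list set \<Rightarrow> nat list \<Rightarrow> nat list set" where
  "rchildren R x = {y \<in> R. \<exists>i. y = x @ [i]}"

fun atom_sat :: "'ap stree \<Rightarrow> nat list set \<Rightarrow> (nat list \<Rightarrow> 'q \<times> nat list)
                  \<Rightarrow> nat list \<Rightarrow> 'q atom \<Rightarrow> bool" where
  "atom_sat T R rl x (Dia k q') =
     (\<exists>V \<subseteq> tchildren T (snd (rl x)). card V = k
        \<and> (\<forall>v \<in> V. \<exists>y \<in> rchildren R x. rl y = (q', v)))"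
| "atom_sat T R rl x (Box k q') =
     (card {v \<in> tchildren T (snd (rl x)). \<not> (\<exists>y \<in> rchildren R x. rl y = (q', v))} < k)"
| "atom_sat T R rl x (Up q') =
     (snd (rl x) \<noteq> [] \<and> (\<exists>y \<in> rchildren R x. rl y = (q', butlast (snd (rl x)))))"

definition is_run :: "('ap, 'q) hta \<Rightarrow> 'ap stree \<Rightarrow> nat list
                       \<Rightarrow> nat list set \<Rightarrow> (nat list \<Rightarrow> 'q \<times> nat list) \<Rightarrow> bool" where
  "is_run A T s R rl \<longleftrightarrow> [] \<in> R
     \<and> (\<forall>x i. x @ [i] \<in> R \<longrightarrow> x \<in> R)
     \<and> rl [] = (init A, s)
     \<and> (\<forall>x \<in> R. snd (rl x) \<in> tdom T
          \<and> pbf_sat (atom_sat T R rl x)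
              (delta A (fst (rl x)) (tlab T (snd (rl x))) (snd (rl x) = [])))"

definition accepting_run :: "('ap, 'q) hta \<Rightarrow> 'ap stree \<Rightarrow> nat list
                       \<Rightarrow> nat list set \<Rightarrow> (nat list \<Rightarrow> 'q \<times> nat list) \<Rightarrow> bool" where
  "accepting_run A T s R rl \<longleftrightarrow> is_run A T s R rl
     \<and> (\<forall>p :: nat \<Rightarrow> nat list. p 0 = [] \<and> (\<forall>n. p (Suc n) \<in> rchildren R (p n))
          \<longrightarrow> (\<forall>m. \<exists>n \<ge> m. fst (rl (p n)) \<in> acc A))"

definition hta_lang :: "('ap, 'q) hta \<Rightarrow> 'ap stree set" where
  "hta_lang A = {T. wf_tree T \<and> (\<exists>R rl. accepting_run A T [] R rl)}"

datatype comp_type = Transient | Existential | Universal | Upward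

fun type_ok :: "('ap, 'q) hta \<Rightarrow> 'q \<Rightarrow> comp_type \<Rightarrow> bool" where
  "type_ok A q Transient =
     (\<forall>\<sigma> \<rho>. q \<notin> atom_state ` pbf_atoms (delta A q \<sigma> \<rho>))"
| "type_ok A q Existential =
     (\<forall>\<sigma> \<rho>. (\<forall>a \<in> pbf_atoms (delta A q \<sigma> \<rho>). atom_state a = q \<longrightarrow> a = Dia 1 q)
        \<and> (\<forall>c \<in> dnf (delta A q \<sigma> \<rho>). card {a \<in> c. atom_state a = q} \<le> 1))"
| "type_ok A q Universal =
     (\<forall>\<sigma> \<rho>. (\<forall>a \<in> pbf_atoms (delta A q \<sigma> \<rho>). atom_state a = q \<longrightarrow> a = Box 1 q)
        \<and> (\<forall>c \<in> cnf (delta A q \<sigma> \<rho>). card {a \<in> c. atom_state a = q} \<le> 1))"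
| "type_ok A q Upward =
     (\<forall>\<sigma> \<rho>. \<forall>a \<in> pbf_atoms (delta A q \<sigma> \<rho>). atom_state a = q \<longrightarrow> a = Up q)"

text \<open>Linear hesitant polarised automaton: all components are singletons {q},
  totally ordered by an injective rank, each assigned a type, polarised.\<close>

definition linear_hta :: "('ap, 'q) hta \<Rightarrow> bool" where
  "linear_hta A \<longleftrightarrow> (\<exists>(rk :: 'q \<Rightarrow> nat) (typ :: 'q \<Rightarrow> comp_type).
       inj rk
     \<and> (\<forall>q \<sigma> \<rho>. \<forall>a \<in> pbf_atoms (delta A q \<sigma> \<rho>). rk (atom_state a) \<le> rk q)
     \<and> (\<forall>q. type_ok A q (typ q))
     \<and> (\<forall>q. typ q = Existential \<longrightarrow> q \<notin> acc A)
     \<and> (\<forall>q. typ q = Universal \<longrightarrow> q \<in> acc A))"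

end

theory Submission
  imports Defs "HOL-Library.Countable"
begin


definition good :: "('ap, 'q) hta \<Rightarrow> 'ap stree \<Rightarrow> 'q \<Rightarrow> nat list \<Rightarrow> bool" where
  "good A T q v \<longleftrightarrow> (\<exists>R rl. accepting_run (A\<lparr>init := q\<rparr>) T v R rl)"

definition goodS :: "('ap, 'q) hta \<Rightarrow> 'ap stree \<Rightarrow> ('q \<times> nat list) set" where
  "goodS A T = {(q,w). good A T q w}"

fun lsat :: "'ap stree \<Rightarrow> ('v \<Rightarrow> 'v set) \<Rightarrow> ('v \<Rightarrow> 'q \<times> nat list) \<Rightarrow> 'v \<Rightarrow> 'q atom \<Rightarrow> bool" where
  "lsat T succ lab v (Dia k q') = (\<exists>V \<subseteq> tchildren T (snd (lab v)). card V = k \<and> (\<forall>u\<in>V. \<exists>v'\<in>succ v. lab v' = (q', u)))"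
| "lsat T succ lab v (Box k q') = (card {u \<in> tchildren T (snd (lab v)). \<not>(\<exists>v'\<in>succ v. lab v' = (q', u))} < k)"
| "lsat T succ lab v (Up q') = (snd (lab v) \<noteq> [] \<and> (\<exists>v'\<in>succ v. lab v' = (q', butlast (snd (lab v)))))"

fun val :: "'ap stree \<Rightarrow> ('q \<times> nat list) set \<Rightarrow> nat list \<Rightarrow> 'q atom \<Rightarrow> bool" where
  "val T S w (Dia k q') = (\<exists>V \<subseteq> tchildren T w. card V = k \<and> (\<forall>u\<in>V. (q', u) \<in> S))"
| "val T S w (Box k q') = (card {u \<in> tchildren T w. (q', u) \<notin> S} < k)"
| "val T S w (Up q') = (w \<noteq> [] \<and> (q', butlast w) \<in> S)"

lemma pbf_mono: "(\<And>a. a \<in> pbf_atoms \<phi> \<Longrightarrow> I a \<Longrightarrow> J a) \<Longrightarrow> pbf_sat I \<phi> \<Longrightarrow> pbf_sat J \<phi>"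
  by (induction \<phi>) auto

lemma pbf_cong: "(\<And>a. a \<in> pbf_atoms \<phi> \<Longrightarrow> I a = J a) \<Longrightarrow> pbf_sat I \<phi> = pbf_sat J \<phi>"
  by (induction \<phi>) auto

lemma from_to_comp[simp]: "from_nat \<circ> to_nat = id"
  by auto

fun chainsf :: "('v \<Rightarrow> 'v set) \<Rightarrow> 'v \<Rightarrow> 'v list \<Rightarrow> bool" where
  "chainsf succ v [] = True"
| "chainsf succ v (w#ws) = (w \<in> succ v \<and> chainsf succ w ws)"

definition vchains :: "('v \<Rightarrow> 'v set) \<Rightarrow> 'v \<Rightarrow> 'v list set" where
  "vchains succ v0 = {vs. chainsf succ v0 vs}"

lemma chains_Nil[simp]: "[] \<in> vchains succ v0"
  by (simp add: vchains_def)

lemma chainsf_snoc: "chainsf succ v0 (vs @ [v]) \<longleftrightarrow> chainsf succ v0 vs \<and> v \<in> succ (last (v0#vs))"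
  by (induction vs arbitrary: v0) auto

lemma chains_snoc: "vs @ [v] \<in> vchains succ v0 \<longleftrightarrow> vs \<in> vchains succ v0 \<and> v \<in> succ (last (v0#vs))"
  by (simp add: vchains_def chainsf_snoc)

lemma chains_W:
  assumes "vs \<in> vchains succ v0" "v0 \<in> W" "\<And>v. v \<in> W \<Longrightarrow> succ v \<subseteq> W"
  shows "last (v0#vs) \<in> W"
  using assms(1)
proof (induction vs rule: rev_induct)
  case Nil then show ?case using assms(2) by simp
next
  case (snoc x xs)
  then show ?case using assms(3) by (auto simp: chains_snoc)
qed

lemma unravel:
  fixes lab :: "'v::countable \<Rightarrow> 'q \<times> nat list"
  assumes W0: "v0 \<in> W" and Wsucc: "\<And>v. v \<in> W \<Longrightarrow> succ v \<subseteq> W"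
  and loc: "\<And>v. v \<in> W \<Longrightarrow> snd (lab v) \<in> tdom T \<and> pbf_sat (lsat T succ lab v) (delta A (fst (lab v)) (tlab T (snd (lab v))) (snd (lab v) = []))"
  and accc: "\<And>c. c 0 = v0 \<Longrightarrow> (\<forall>n. c (Suc n) \<in> succ (c n)) \<Longrightarrow> (\<forall>m. \<exists>n\<ge>m. fst (lab (c n)) \<in> acc A)"
  and ini: "init A = fst (lab v0)"
  shows "accepting_run A T (snd (lab v0)) (map to_nat ` vchains succ v0) (\<lambda>x. lab (last (v0 # map from_nat x)))"
proof -
  define R where "R = map to_nat ` vchains succ v0"
  define rl where "rl = (\<lambda>x. lab (last (v0 # map from_nat x)))"
  have mapinv: "map from_nat (map to_nat vs) = vs" for vs :: "'v list"
    by (induction vs) auto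
  have rlmap: "rl (map to_nat vs) = lab (last (v0#vs))" for vs
    by (simp add: rl_def mapinv)
  have rch: "rchildren R (map to_nat vs) = (\<lambda>v. map to_nat (vs@[v])) ` succ (last (v0#vs))"
    if vs: "vs \<in> vchains succ v0" for vs
  proof
    show "rchildren R (map to_nat vs) \<subseteq> (\<lambda>v. map to_nat (vs@[v])) ` succ (last (v0#vs))"
    proof
      fix y assume "y \<in> rchildren R (map to_nat vs)"
      then obtain i ws where y: "y = map to_nat vs @ [i]" "y = map to_nat ws" "ws \<in> vchains succ v0"
        unfolding rchildren_def R_def by blast
      have "ws = map from_nat y" using y(2) by (simp add: mapinv)
      also have "\<dots> = vs @ [from_nat i]" using y(1) by (simp add: mapinv)
      finally have ws: "ws = vs @ [from_nat i]" .
      then have "from_nat i \<in> succ (last (v0#vs))" using y(3) by (simp add: chains_snoc)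
      moreover have "y = map to_nat (vs @ [from_nat i])" using y(2) ws by simp
      ultimately show "y \<in> (\<lambda>v. map to_nat (vs@[v])) ` succ (last (v0#vs))" by blast
    qed
  next
    show "(\<lambda>v. map to_nat (vs@[v])) ` succ (last (v0#vs)) \<subseteq> rchildren R (map to_nat vs)"
    proof
      fix y assume "y \<in> (\<lambda>v. map to_nat (vs@[v])) ` succ (last (v0#vs))"
      then obtain v where v: "v \<in> succ (last (v0#vs))" "y = map to_nat (vs@[v])" by blast
      then have vv: "vs @ [v] \<in> vchains succ v0" using vs by (simp add: chains_snoc)
      then have "y \<in> R" unfolding R_def using v(2) by blast
      then show "y \<in> rchildren R (map to_nat vs)" unfolding rchildren_def using v(2) by simp
    qed
  qed
  have exch: "(\<exists>y\<in>rchildren R (map to_nat vs). rl y = P) \<longleftrightarrow> (\<exists>v'\<in>succ (last (v0#vs)). lab v' = P)"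
    if vs: "vs \<in> vchains succ v0" for vs P
  proof -
    have r2: "rl (map to_nat vs @ [to_nat v]) = lab v" for v
      using rlmap[of "vs @ [v]"] by simp
    show ?thesis unfolding rch[OF vs] by (simp add: r2)
  qed
  have run: "is_run A T (snd (lab v0)) R rl"
    unfolding is_run_def
  proof (intro conjI allI impI ballI)
    show "[] \<in> R" unfolding R_def using chains_Nil by (metis image_eqI list.map(1))
  next
    fix x i assume "x @ [i] \<in> R"
    then obtain ws where ws: "x @ [i] = map to_nat ws" "ws \<in> vchains succ v0" by (auto simp: R_def)
    then have "ws \<noteq> []" by auto
    then have e: "ws = butlast ws @ [last ws]" by simp
    then have "butlast ws @ [last ws] \<in> vchains succ v0" using ws(2) by simp
    then have "butlast ws \<in> vchains succ v0" unfolding chains_snoc by simp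
    moreover have "x = map to_nat (butlast ws)"
    proof -
      have "butlast (x @ [i]) = butlast (map to_nat ws)" using ws(1) by simp
      then show ?thesis by (simp add: map_butlast)
    qed
    ultimately show "x \<in> R" by (auto simp: R_def)
  next
    show "rl [] = (init A, snd (lab v0))" by (simp add: rl_def ini)
  next
    fix x assume "x \<in> R"
    then obtain vs where vs: "x = map to_nat vs" "vs \<in> vchains succ v0" by (auto simp: R_def)
    have W: "last (v0#vs) \<in> W" using chains_W[OF vs(2) W0 Wsucc] .
    note L = loc[OF W]
    have rlx: "rl x = lab (last (v0#vs))" using vs rlmap by simp
    show "snd (rl x) \<in> tdom T" using L rlx by simp
    have eq: "lsat T succ lab (last (v0#vs)) a = atom_sat T R rl x a" for a
      unfolding vs(1) by (cases a) (simp_all only: lsat.simps atom_sat.simps rlmap exch[OF vs(2)])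
    show "pbf_sat (atom_sat T R rl x) (delta A (fst (rl x)) (tlab T (snd (rl x))) (snd (rl x) = []))"
    proof -
      have "pbf_sat (lsat T succ lab (last (v0#vs))) (delta A (fst (rl x)) (tlab T (snd (rl x))) (snd (rl x) = []))"
        using L rlx by simp
      then show ?thesis using pbf_cong[of _ "atom_sat T R rl x" "lsat T succ lab (last (v0#vs))"] eq by metis
    qed
  qed
  have "\<forall>m. \<exists>n\<ge>m. fst (rl (p n)) \<in> acc A"
    if p: "p 0 = []" "\<forall>n. p (Suc n) \<in> rchildren R (p n)" for p
  proof -
    have inR: "\<exists>vs\<in>vchains succ v0. p n = map to_nat vs" for n
    proof (induction n)
      case 0 then show ?case using p(1) by (metis chains_Nil list.map(1))
    next
      case (Suc n)
      then obtain vs where vs: "vs \<in> vchains succ v0" "p n = map to_nat vs" by blast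
      then have "p (Suc n) \<in> (\<lambda>v. map to_nat (vs@[v])) ` succ (last (v0#vs))"
        using p(2) rch by metis
      then obtain v where v: "v \<in> succ (last (v0#vs))" "p (Suc n) = map to_nat (vs@[v])" by blast
      then have "vs @ [v] \<in> vchains succ v0" using vs(1) by (simp add: chains_snoc)
      then show ?case using v(2) by blast
    qed
    define c where "c n = last (v0 # map from_nat (p n))" for n
    have "c 0 = v0" by (simp add: c_def p(1))
    moreover have "\<forall>n. c (Suc n) \<in> succ (c n)"
    proof
      fix n
      obtain vs where vs: "vs \<in> vchains succ v0" "p n = map to_nat vs" using inR by blast
      then have "p (Suc n) \<in> (\<lambda>v. map to_nat (vs@[v])) ` succ (last (v0#vs))"
        using p(2) rch by metis
      then obtain v' where "v' \<in> succ (last (v0#vs))" "p (Suc n) = map to_nat (vs@[v'])" by blast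
      then show "c (Suc n) \<in> succ (c n)" using vs by (simp add: c_def mapinv)
    qed
    ultimately have "\<forall>m. \<exists>n\<ge>m. fst (lab (c n)) \<in> acc A" using accc by blast
    then show ?thesis by (simp add: c_def rl_def)
  qed
  then show ?thesis using run unfolding accepting_run_def R_def rl_def by blast
qed



lemma prefix_closed: "(\<forall>x i. x @ [i] \<in> R \<longrightarrow> x \<in> R) \<Longrightarrow> ys @ zs \<in> R \<Longrightarrow> ys \<in> R"
proof (induction zs rule: rev_induct)
  case Nil then show ?case by simp
next
  case (snoc z zs)
  then have "(ys @ zs) @ [z] \<in> R" by simp
  then have "ys @ zs \<in> R" using snoc(2) by blast
  then show ?case using snoc by blast
qed

lemma good_dom: "good A T q v \<Longrightarrow> v \<in> tdom T"
  unfolding good_def accepting_run_def is_run_def by force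

lemma subrun:
  assumes run: "accepting_run (A\<lparr>init := q0\<rparr>) T s R rl" and x: "x \<in> R"
  shows "good A T (fst (rl x)) (snd (rl x))"
proof -
  have isr: "is_run (A\<lparr>init := q0\<rparr>) T s R rl" using run by (simp add: accepting_run_def)
  have pc: "\<forall>x i. x @ [i] \<in> R \<longrightarrow> x \<in> R" using isr by (simp add: is_run_def)
  have "accepting_run (A\<lparr>init := fst (rl x)\<rparr>) T (snd (rl x))
          (map to_nat ` vchains (rchildren R) x) (\<lambda>z. rl (last (x # map from_nat z)))"
  proof (rule unravel[where W = R])
    show "x \<in> R" by fact
    show "rchildren R v \<subseteq> R" for v by (auto simp: rchildren_def)
  next
    fix v assume "v \<in> R"
    then have "snd (rl v) \<in> tdom T \<and> pbf_sat (atom_sat T R rl v) (delta A (fst (rl v)) (tlab T (snd (rl v))) (snd (rl v) = []))"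
      using isr by (simp add: is_run_def)
    moreover have "lsat T (rchildren R) rl v = atom_sat T R rl v"
    proof (rule ext)
      fix a show "lsat T (rchildren R) rl v a = atom_sat T R rl v a" by (cases a) simp_all
    qed
    ultimately show "snd (rl v) \<in> tdom T \<and> pbf_sat (lsat T (rchildren R) rl v) (delta (A\<lparr>init := fst (rl x)\<rparr>) (fst (rl v)) (tlab T (snd (rl v))) (snd (rl v) = []))"
      by simp
  next
    show "init (A\<lparr>init := fst (rl x)\<rparr>) = fst (rl x)" by simp
  next
    fix c assume c0: "c 0 = x" and cs: "\<forall>n. c (Suc n) \<in> rchildren R (c n)"
    define p where "p n = (if n < length x then take n x else c (n - length x))" for n
    have p0: "p 0 = []" using c0 by (cases x) (auto simp: p_def)
    have ps: "p (Suc n) \<in> rchildren R (p n)" for n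
    proof (cases "Suc n < length x")
      case True
      have "take (Suc n) x @ drop (Suc n) x \<in> R" using x by simp
      then have "take (Suc n) x \<in> R" using prefix_closed[OF pc] by blast
      moreover have "take (Suc n) x = take n x @ [x ! n]" using True by (simp add: take_Suc_conv_app_nth)
      ultimately show ?thesis using True by (simp add: p_def rchildren_def)
    next
      case False
      show ?thesis
      proof (cases "Suc n = length x")
        case True
        have "x = take (Suc n) x" using True by simp
        also have "\<dots> = take n x @ [x ! n]" by (rule take_Suc_conv_app_nth) (use True in simp)
        finally have xe: "x = take n x @ [x ! n]" .
        have e1: "p (Suc n) = x" "p n = take n x" using True c0 by (auto simp: p_def)
        show ?thesis unfolding rchildren_def e1(1) e1(2) using x xe by blast
      next
        case False
        then have "n \<ge> length x" "Suc n - length x = Suc (n - length x)" using \<open>\<not> Suc n < length x\<close> by auto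
        then show ?thesis using cs \<open>\<not> Suc n < length x\<close> by (simp add: p_def)
      qed
    qed
    have acc: "\<forall>m. \<exists>n\<ge>m. fst (rl (p n)) \<in> acc (A\<lparr>init := q0\<rparr>)"
      using run p0 ps unfolding accepting_run_def by blast
    show "\<forall>m. \<exists>n\<ge>m. fst (rl (c n)) \<in> acc (A\<lparr>init := fst (rl x)\<rparr>)"
    proof
      fix m
      obtain n where n: "n \<ge> m + length x" "fst (rl (p n)) \<in> acc (A\<lparr>init := q0\<rparr>)" using acc by blast
      then have "p n = c (n - length x)" by (simp add: p_def)
      then show "\<exists>n\<ge>m. fst (rl (c n)) \<in> acc (A\<lparr>init := fst (rl x)\<rparr>)"
        using n by (intro exI[of _ "n - length x"]) auto
    qed
  qed
  then show ?thesis unfolding good_def by blast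
qed

lemma wf_fin: "wf_tree T \<Longrightarrow> w \<in> tdom T \<Longrightarrow> finite (tchildren T w)"
  by (simp add: wf_tree_def)

lemma atom_sat_val:
  assumes wf: "wf_tree T" and run: "accepting_run (A\<lparr>init := q0\<rparr>) T s R rl" and x: "x \<in> R"
    and as: "atom_sat T R rl x a"
  shows "val T (goodS A T) (snd (rl x)) a"
proof -
  have isr: "is_run (A\<lparr>init := q0\<rparr>) T s R rl" using run by (simp add: accepting_run_def)
  have dom: "snd (rl x) \<in> tdom T" using isr x by (simp add: is_run_def)
  have fin: "finite (tchildren T (snd (rl x)))" using wf_fin[OF wf dom] .
  have gy: "rl y \<in> goodS A T" if "y \<in> rchildren R x" for y
    using subrun[OF run, of y] that by (auto simp: rchildren_def goodS_def)
  show ?thesis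
  proof (cases a)
    case (Dia k q')
    then obtain V where V: "V \<subseteq> tchildren T (snd (rl x))" "card V = k"
      "\<forall>u\<in>V. \<exists>y\<in>rchildren R x. rl y = (q', u)" using as by auto
    have "\<forall>u\<in>V. (q', u) \<in> goodS A T"
    proof
      fix u assume "u \<in> V"
      then obtain y where "y \<in> rchildren R x" "rl y = (q', u)" using V(3) by blast
      then show "(q', u) \<in> goodS A T" using gy by metis
    qed
    then show ?thesis using V Dia by auto
  next
    case (Box k q')
    have "{u \<in> tchildren T (snd (rl x)). (q', u) \<notin> goodS A T}
        \<subseteq> {u \<in> tchildren T (snd (rl x)). \<not> (\<exists>y\<in>rchildren R x. rl y = (q', u))}"
    proof (intro subsetI CollectI conjI)
      fix u assume u: "u \<in> {u \<in> tchildren T (snd (rl x)). (q', u) \<notin> goodS A T}"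
      then show "u \<in> tchildren T (snd (rl x))" by simp
      show "\<not> (\<exists>y\<in>rchildren R x. rl y = (q', u))"
      proof
        assume "\<exists>y\<in>rchildren R x. rl y = (q', u)"
        then obtain y where "y \<in> rchildren R x" "rl y = (q', u)" by blast
        then have "(q', u) \<in> goodS A T" using gy by metis
        then show False using u by simp
      qed
    qed
    then have "card {u \<in> tchildren T (snd (rl x)). (q', u) \<notin> goodS A T}
        \<le> card {u \<in> tchildren T (snd (rl x)). \<not> (\<exists>y\<in>rchildren R x. rl y = (q', u))}"
      by (rule card_mono[rotated]) (use fin in simp)
    then show ?thesis using as Box by simp
  next
    case (Up q')
    then obtain y where "y \<in> rchildren R x" "rl y = (q', butlast (snd (rl x)))" "snd (rl x) \<noteq> []"
      using as by auto
    then show ?thesis using gy Up by (metis val.simps(3))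
  qed
qed

lemma unfold_fwd:
  assumes wf: "wf_tree T" and g: "good A T q v"
  shows "pbf_sat (val T (goodS A T) v) (delta A q (tlab T v) (v = []))"
proof -
  obtain R rl where run: "accepting_run (A\<lparr>init := q\<rparr>) T v R rl" using g good_def by metis
  have isr: "is_run (A\<lparr>init := q\<rparr>) T v R rl" using run by (simp add: accepting_run_def)
  have r0: "[] \<in> R" "rl [] = (q, v)" using isr by (auto simp: is_run_def)
  have "pbf_sat (atom_sat T R rl []) (delta A q (tlab T v) (v = []))"
    using isr r0 unfolding is_run_def by force
  then show ?thesis
    by (rule pbf_mono[rotated]) (use atom_sat_val[OF wf run r0(1)] r0(2) in simp)
qed



definition nbr :: "'ap stree \<Rightarrow> nat list \<Rightarrow> nat list \<Rightarrow> bool" where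
  "nbr T w u \<longleftrightarrow> u \<in> tchildren T w \<or> (w \<noteq> [] \<and> u = butlast w)"

lemma glue:
  fixes A :: "('ap, 'q::countable) hta"
  assumes wf: "wf_tree T"
  and loc: "\<And>q' w. (q',w) \<in> P \<Longrightarrow> w \<in> tdom T \<and> pbf_sat (val T (P \<union> goodS A T) w) (delta A q' (tlab T w) (w = []))"
  and ch: "\<And>c. \<forall>n. c n \<in> P \<and> nbr T (snd (c n)) (snd (c (Suc n))) \<Longrightarrow> (\<forall>m. \<exists>n\<ge>m. fst (c n) \<in> acc A)"
  and qv: "(q,v) \<in> P"
  shows "good A T q v"
proof -
  define RL where "RL p = (SOME r. accepting_run (A\<lparr>init := fst p\<rparr>) T (snd p) (fst r) (snd r))" for p :: "'q \<times> nat list"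
  have RLp: "accepting_run (A\<lparr>init := fst p\<rparr>) T (snd p) (fst (RL p)) (snd (RL p))" if pg: "p \<in> goodS A T" for p
  proof -
    obtain R rl where "accepting_run (A\<lparr>init := fst p\<rparr>) T (snd p) R rl"
      using pg unfolding goodS_def good_def by (cases p) auto
    then have "\<exists>r. accepting_run (A\<lparr>init := fst p\<rparr>) T (snd p) (fst r) (snd r)" by (intro exI[of _ "(R,rl)"]) simp
    then show ?thesis unfolding RL_def by (rule someI_ex)
  qed
  have RL0: "[] \<in> fst (RL p) \<and> snd (RL p) [] = p" if "p \<in> goodS A T" for p
    using RLp[OF that] by (cases p) (simp add: accepting_run_def is_run_def)
  define succ where "succ v = (case v of Inl (pr :: 'q \<times> nat list) \<Rightarrow>
        Inl ` {p \<in> P. nbr T (snd pr) (snd p)} \<union> (\<lambda>p. Inr (p, [])) ` {p \<in> goodS A T. nbr T (snd pr) (snd p)}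
     | Inr (p, y) \<Rightarrow> (\<lambda>y'. Inr (p, y')) ` rchildren (fst (RL p)) y)" for v
  define lab where "lab v = (case v of Inl pr \<Rightarrow> pr | Inr (p, y) \<Rightarrow> snd (RL p) y)" for v
  define W where "W = Inl ` P \<union> {Inr (p, y) | p y. p \<in> goodS A T \<and> y \<in> fst (RL p)}"
  have step: "\<exists>v'\<in>succ (Inl pr). lab v' = (q'', u)" if "(q'', u) \<in> P \<union> goodS A T" "nbr T (snd pr) u" for pr q'' u
  proof (cases "(q'', u) \<in> P")
    case True
    then have "Inl (q'', u) \<in> succ (Inl pr)" using that(2) by (simp add: succ_def)
    then show ?thesis by (intro bexI[of _ "Inl (q'', u)"]) (simp_all add: lab_def)
  next
    case False
    then have g: "(q'', u) \<in> goodS A T" using that(1) by blast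
    then have "Inr ((q'', u), []) \<in> succ (Inl pr)" using that(2) by (simp add: succ_def)
    then show ?thesis using RL0[OF g] by (intro bexI[of _ "Inr ((q'', u), [])"]) (simp_all add: lab_def)
  qed
  have "accepting_run (A\<lparr>init := fst (lab (Inl (q,v)))\<rparr>) T (snd (lab (Inl (q,v))))
          (map to_nat ` vchains succ (Inl (q,v))) (\<lambda>x. lab (last (Inl (q,v) # map from_nat x)))"
  proof (rule unravel[where W = W])
    show "Inl (q, v) \<in> W" using qv by (simp add: W_def)
  next
    fix z assume "z \<in> W"
    then show "succ z \<subseteq> W"
    proof (cases z)
      case (Inl pr)
      show ?thesis unfolding Inl succ_def W_def using RL0 by auto
    next
      case (Inr py)
      then obtain p y where py: "z = Inr (p, y)" by (cases py) auto
      then have pg: "p \<in> goodS A T" using \<open>z \<in> W\<close> by (auto simp: W_def)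
      show ?thesis unfolding py succ_def W_def using pg by (cases p) (auto simp: rchildren_def)
    qed
  next
    show "init (A\<lparr>init := fst (lab (Inl (q, v)))\<rparr>) = fst (lab (Inl (q, v)))" by simp
  next
    fix z assume zW: "z \<in> W"
    show "snd (lab z) \<in> tdom T \<and> pbf_sat (lsat T succ lab z) (delta (A\<lparr>init := fst (lab (Inl (q, v)))\<rparr>) (fst (lab z)) (tlab T (snd (lab z))) (snd (lab z) = []))"
    proof (cases z)
      case (Inl pr)
      obtain q' w where pr: "pr = (q', w)" by (cases pr)
      have inP: "(q', w) \<in> P" using zW Inl pr by (auto simp: W_def)
      note L = loc[OF inP]
      have fin: "finite (tchildren T w)" using wf_fin[OF wf] L by blast
      have lz: "lab z = (q', w)" by (simp add: lab_def Inl pr)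
      have lsv: "lsat T succ lab z a" if a: "val T (P \<union> goodS A T) w a" for a
      proof (cases a)
        case (Dia k q'')
        then obtain V where V: "V \<subseteq> tchildren T w" "card V = k" "\<forall>u\<in>V. (q'', u) \<in> P \<union> goodS A T"
          using a by auto
        have "\<forall>u\<in>V. \<exists>v'\<in>succ z. lab v' = (q'', u)"
        proof
          fix u assume "u \<in> V"
          then have "(q'', u) \<in> P \<union> goodS A T" "nbr T (snd pr) u" using V by (auto simp: nbr_def pr)
          then show "\<exists>v'\<in>succ z. lab v' = (q'', u)" using step Inl by blast
        qed
        then show ?thesis using V Dia lz by auto
      next
        case (Box k q'')
        have "{u \<in> tchildren T w. \<not> (\<exists>v'\<in>succ z. lab v' = (q'', u))} \<subseteq> {u \<in> tchildren T w. (q'', u) \<notin> P \<union> goodS A T}"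
        proof (intro subsetI CollectI conjI)
          fix u assume u: "u \<in> {u \<in> tchildren T w. \<not> (\<exists>v'\<in>succ z. lab v' = (q'', u))}"
          then show "u \<in> tchildren T w" by simp
          show "(q'', u) \<notin> P \<union> goodS A T"
          proof
            assume "(q'', u) \<in> P \<union> goodS A T"
            moreover have "nbr T (snd pr) u" using u by (simp add: nbr_def pr)
            ultimately show False using step[of q'' u pr] u Inl by blast
          qed
        qed
        then have "card {u \<in> tchildren T w. \<not> (\<exists>v'\<in>succ z. lab v' = (q'', u))} \<le> card {u \<in> tchildren T w. (q'', u) \<notin> P \<union> goodS A T}"
          by (rule card_mono[rotated]) (use fin in simp)
        then show ?thesis using a Box lz by simp
      next
        case (Up q'')
        then have "w \<noteq> []" "(q'', butlast w) \<in> P \<union> goodS A T" using a by auto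
        moreover have "nbr T (snd pr) (butlast w)" using \<open>w \<noteq> []\<close> by (simp add: nbr_def pr)
        ultimately show ?thesis using step[of q'' "butlast w" pr] Inl Up lz by simp
      qed
      have Lv: "pbf_sat (val T (P \<union> goodS A T) w) (delta A q' (tlab T w) (w = []))" using L by blast
      have "pbf_sat (lsat T succ lab z) (delta A q' (tlab T w) (w = []))"
        by (rule pbf_mono[OF _ Lv]) (rule lsv)
      then show ?thesis using L lz by simp
    next
      case (Inr py)
      obtain p y where py: "py = (p, y)" by (cases py)
      have pg: "p \<in> goodS A T" and yR: "y \<in> fst (RL p)" using zW unfolding Inr py W_def by blast+
      have isr: "is_run (A\<lparr>init := fst p\<rparr>) T (snd p) (fst (RL p)) (snd (RL p))"
        using RLp[OF pg] by (simp add: accepting_run_def)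
      then have L: "snd (snd (RL p) y) \<in> tdom T \<and> pbf_sat (atom_sat T (fst (RL p)) (snd (RL p)) y)
          (delta A (fst (snd (RL p) y)) (tlab T (snd (snd (RL p) y))) (snd (snd (RL p) y) = []))"
        using yR unfolding is_run_def by simp
      have lz: "lab z = snd (RL p) y" by (simp add: lab_def Inr py)
      have lab_inr: "lab (Inr (p, y')) = snd (RL p) y'" for y' by (simp add: lab_def)
      have sz: "succ z = (\<lambda>y'. Inr (p, y')) ` rchildren (fst (RL p)) y" by (simp add: succ_def Inr py)
      have "lsat T succ lab z = atom_sat T (fst (RL p)) (snd (RL p)) y"
      proof (rule ext)
        fix a show "lsat T succ lab z a = atom_sat T (fst (RL p)) (snd (RL p)) y a"
          by (cases a) (simp_all add: lz sz lab_inr)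
      qed
      then show ?thesis using L lz by simp
    qed
  next
    fix c assume c0: "c 0 = Inl (q, v)" and cs: "\<forall>n. c (Suc n) \<in> succ (c n)"
    show "\<forall>m. \<exists>n\<ge>m. fst (lab (c n)) \<in> acc (A\<lparr>init := fst (lab (Inl (q, v)))\<rparr>)"
    proof (cases "\<forall>n. isl (c n)")
      case True
      define d where "d n = projl (c n)" for n
      have cd: "c n = Inl (d n)" for n using True by (simp add: d_def)
      have dP: "d n \<in> P" for n
      proof (cases n)
        case 0 then show ?thesis using c0 qv cd[of 0] by simp
      next
        case (Suc k)
        have "c (Suc k) \<in> succ (c k)" using cs by blast
        then have "Inl (d n) \<in> succ (Inl (d k))" using cd[of k] cd[of n] Suc by simp
        then show ?thesis by (auto simp: succ_def)
      qed
      have dn: "nbr T (snd (d n)) (snd (d (Suc n)))" for n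
      proof -
        have "c (Suc n) \<in> succ (c n)" using cs by blast
        then have "Inl (d (Suc n)) \<in> succ (Inl (d n))" using cd[of n] cd[of "Suc n"] by simp
        then show ?thesis by (auto simp: succ_def)
      qed
      have "\<forall>m. \<exists>n\<ge>m. fst (d n) \<in> acc A" using ch[of d] dP dn by blast
      then show ?thesis using cd by (simp add: lab_def)
    next
      case False
      define n0 where "n0 = (LEAST n. \<not> isl (c n))"
      have n0: "\<not> isl (c n0)" unfolding n0_def by (rule LeastI_ex) (use False in blast)
      have n0pos: "n0 \<noteq> 0"
      proof
        assume "n0 = 0" then show False using n0 c0 by simp
      qed
      then obtain k where k: "n0 = Suc k" by (cases n0) auto
      have "isl (c k)" using not_less_Least[of k "\<lambda>n. \<not> isl (c n)"] k n0_def by auto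
      then obtain pr where pr: "c k = Inl pr" by (cases "c k") auto
      have "c (Suc k) \<in> succ (c k)" using cs by blast
      then have "c n0 \<in> succ (Inl pr)" using k pr by simp
      then obtain p where p: "p \<in> goodS A T" "c n0 = Inr (p, [])" using n0 by (auto simp: succ_def)
      have pth: "\<exists>y. c (n0 + j) = Inr (p, y)" for j
      proof (induction j)
        case 0 then show ?case using p by simp
      next
        case (Suc j)
        then obtain y where "c (n0 + j) = Inr (p, y)" by blast
        then have "c (Suc (n0 + j)) \<in> succ (Inr (p, y))" using cs[rule_format, of "n0 + j"] by simp
        then show ?case by (auto simp: succ_def)
      qed
      define yk where "yk j = snd (projr (c (n0 + j)))" for j
      have cy: "c (n0 + j) = Inr (p, yk j)" for j
        using pth[of j] by (auto simp: yk_def)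
      have y0: "yk 0 = []" using cy[of 0] p by simp
      have ys: "\<forall>j. yk (Suc j) \<in> rchildren (fst (RL p)) (yk j)"
      proof
        fix j
        have "c (Suc (n0 + j)) \<in> succ (Inr (p, yk j))" using cs[rule_format, of "n0 + j"] cy[of j] by simp
        moreover have "c (Suc (n0 + j)) = Inr (p, yk (Suc j))" using cy[of "Suc j"] by simp
        ultimately show "yk (Suc j) \<in> rchildren (fst (RL p)) (yk j)" by (auto simp: succ_def)
      qed
      have "\<forall>m. \<exists>n\<ge>m. fst (snd (RL p) (yk n)) \<in> acc (A\<lparr>init := fst p\<rparr>)"
        using RLp[OF p(1)] y0 ys unfolding accepting_run_def by blast
      then have "\<forall>m. \<exists>n\<ge>m. fst (lab (c (n0 + n))) \<in> acc A"
        using cy by (simp add: lab_def)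
      then have ev: "\<forall>m. \<exists>n\<ge>m. fst (lab (c n)) \<in> acc A"
      proof (intro allI)
        fix m assume h: "\<forall>m. \<exists>n\<ge>m. fst (lab (c (n0 + n))) \<in> acc A"
        then obtain n where "n \<ge> m" "fst (lab (c (n0 + n))) \<in> acc A" by blast
        then show "\<exists>n\<ge>m. fst (lab (c n)) \<in> acc A" by (intro exI[of _ "n0 + n"]) auto
      qed
      then show ?thesis by simp
    qed
  qed
  then show ?thesis unfolding good_def by (auto simp: lab_def)
qed



definition TT :: "'ap pctl" where "TT = Or (Prop undefined) (Neg (Prop undefined))"
definition FF :: "'ap pctl" where "FF = Neg TT"
definition AND :: "'ap pctl \<Rightarrow> 'ap pctl \<Rightarrow> 'ap pctl" where "AND a b = Neg (Or (Neg a) (Neg b))"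

lemma sat_TT[simp]: "sat T u TT" by (simp add: TT_def)
lemma sat_FF[simp]: "\<not> sat T u FF" by (simp add: FF_def)
lemma sat_AND[simp]: "sat T u (AND a b) \<longleftrightarrow> sat T u a \<and> sat T u b" by (simp add: AND_def)

definition ORs :: "'ap pctl list \<Rightarrow> 'ap pctl" where "ORs xs = foldr Or xs FF"
definition ANDs :: "'ap pctl list \<Rightarrow> 'ap pctl" where "ANDs xs = foldr AND xs TT"

lemma sat_ORs[simp]: "sat T u (ORs xs) \<longleftrightarrow> (\<exists>\<phi>\<in>set xs. sat T u \<phi>)"
  by (induction xs) (auto simp: ORs_def)
lemma sat_ANDs[simp]: "sat T u (ANDs xs) \<longleftrightarrow> (\<forall>\<phi>\<in>set xs. sat T u \<phi>)"
  by (induction xs) (auto simp: ANDs_def)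

definition allL :: "'a::finite list" where "allL = (SOME xs. set xs = UNIV)"
lemma set_allL[simp]: "set (allL :: 'a::finite list) = UNIV"
  unfolding allL_def by (rule someI_ex) (rule finite_list, simp)

definition lit :: "'ap set \<Rightarrow> 'ap \<Rightarrow> 'ap pctl" where
  "lit \<sigma> p = (if p \<in> \<sigma> then Prop p else Neg (Prop p))"

lemma sat_lit: "sat T u (lit \<sigma> p) \<longleftrightarrow> (p \<in> tlab T u \<longleftrightarrow> p \<in> \<sigma>)"
  by (simp add: lit_def)

definition isLab :: "'ap::finite set \<Rightarrow> 'ap pctl" where
  "isLab \<sigma> = ANDs (map (lit \<sigma>) allL)"

lemma sat_isLab[simp]: "sat T u (isLab \<sigma>) \<longleftrightarrow> tlab T u = \<sigma>"
proof -
  have "sat T u (isLab \<sigma>) \<longleftrightarrow> (\<forall>p. p \<in> tlab T u \<longleftrightarrow> p \<in> \<sigma>)"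
    by (simp add: isLab_def sat_lit)
  then show ?thesis by blast
qed

definition isRoot :: "bool \<Rightarrow> 'ap pctl" where
  "isRoot \<rho> = (if \<rho> then Neg (EY TT) else EY TT)"

lemma sat_isRoot[simp]: "sat T u (isRoot \<rho>) \<longleftrightarrow> ((u = []) = \<rho>)"
  by (auto simp: isRoot_def)

definition CASE :: "('ap::finite set \<Rightarrow> bool \<Rightarrow> 'ap pctl) \<Rightarrow> 'ap pctl" where
  "CASE H = ORs (map (\<lambda>(\<sigma>,\<rho>). AND (isLab \<sigma>) (AND (isRoot \<rho>) (H \<sigma> \<rho>))) allL)"

lemma sat_CASE: "sat T u (CASE H) \<longleftrightarrow> sat T u (H (tlab T u) (u = []))"
proof
  assume "sat T u (CASE H)"
  then show "sat T u (H (tlab T u) (u = []))" by (auto simp: CASE_def)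
next
  assume h: "sat T u (H (tlab T u) (u = []))"
  have "(tlab T u, u = []) \<in> set allL" by simp
  then show "sat T u (CASE H)" unfolding CASE_def sat_ORs using h
    by (intro bexI[of _ "AND (isLab (tlab T u)) (AND (isRoot (u = [])) (H (tlab T u) (u = [])))"]) auto
qed

fun tr :: "('q atom \<Rightarrow> 'ap pctl) \<Rightarrow> 'q atom pbf \<Rightarrow> 'ap pctl" where
  "tr F PTrue = TT"
| "tr F PFalse = FF"
| "tr F (PAtom a) = F a"
| "tr F (PAnd f g) = AND (tr F f) (tr F g)"
| "tr F (POr f g) = Or (tr F f) (tr F g)"

lemma sat_tr: "sat T u (tr F \<phi>) \<longleftrightarrow> pbf_sat (\<lambda>a. sat T u (F a)) \<phi>"
  by (induction \<phi>) auto

fun af :: "('q \<Rightarrow> 'ap pctl) \<Rightarrow> 'q atom \<Rightarrow> 'ap pctl" where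
  "af \<Phi> (Dia k q) = Dn k (\<Phi> q)"
| "af \<Phi> (Box k q) = Neg (Dn k (Neg (\<Phi> q)))"
| "af \<Phi> (Up q) = EY (\<Phi> q)"

definition fS :: "('q \<Rightarrow> 'ap pctl) \<Rightarrow> 'ap stree \<Rightarrow> ('q \<times> nat list) set" where
  "fS \<Phi> T = {(q,w). sat T w (\<Phi> q)}"

lemma af_sat:
  assumes wf: "wf_tree T" and w: "w \<in> tdom T"
  shows "sat T w (af \<Phi> a) \<longleftrightarrow> val T (fS \<Phi> T) w a"
proof -
  have fin: "finite (tchildren T w)" using wf_fin[OF wf w] .
  show ?thesis
  proof (cases a)
    case (Dia k q)
    have "k \<le> card {c \<in> tchildren T w. sat T c (\<Phi> q)} \<longleftrightarrow> (\<exists>V\<subseteq>tchildren T w. card V = k \<and> (\<forall>u\<in>V. sat T u (\<Phi> q)))"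
    proof
      assume "k \<le> card {c \<in> tchildren T w. sat T c (\<Phi> q)}"
      then obtain V where "V \<subseteq> {c \<in> tchildren T w. sat T c (\<Phi> q)}" "card V = k"
        by (rule obtain_subset_with_card_n)
      then show "\<exists>V\<subseteq>tchildren T w. card V = k \<and> (\<forall>u\<in>V. sat T u (\<Phi> q))" by blast
    next
      assume "\<exists>V\<subseteq>tchildren T w. card V = k \<and> (\<forall>u\<in>V. sat T u (\<Phi> q))"
      then obtain V where V: "V \<subseteq> tchildren T w" "card V = k" "\<forall>u\<in>V. sat T u (\<Phi> q)" by blast
      then have "V \<subseteq> {c \<in> tchildren T w. sat T c (\<Phi> q)}" by blast
      then have "card V \<le> card {c \<in> tchildren T w. sat T c (\<Phi> q)}"
        by (rule card_mono[rotated]) (use fin in simp)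
      then show "k \<le> card {c \<in> tchildren T w. sat T c (\<Phi> q)}" using V by simp
    qed
    then show ?thesis using Dia by (simp add: fS_def)
  next
    case (Box k q)
    then show ?thesis by (auto simp: fS_def not_le)
  next
    case (Up q)
    then show ?thesis by (simp add: fS_def)
  qed
qed

lemma butlast_dom: "wf_tree T \<Longrightarrow> w \<in> tdom T \<Longrightarrow> w \<noteq> [] \<Longrightarrow> butlast w \<in> tdom T"
  unfolding wf_tree_def by (metis append_butlast_last_id)

lemma val_cong:
  assumes wf: "wf_tree T" and w: "w \<in> tdom T"
    and eq: "\<And>u. u \<in> tdom T \<Longrightarrow> (atom_state a, u) \<in> S \<longleftrightarrow> (atom_state a, u) \<in> S'"
  shows "val T S w a = val T S' w a"
proof (cases a)
  case (Dia k q)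
  have h: "\<And>u. u \<in> tchildren T w \<Longrightarrow> (q, u) \<in> S \<longleftrightarrow> (q, u) \<in> S'" using eq Dia by (auto simp: tchildren_def)
  have "(\<exists>V\<subseteq>tchildren T w. card V = k \<and> (\<forall>u\<in>V. (q, u) \<in> S)) \<longleftrightarrow> (\<exists>V\<subseteq>tchildren T w. card V = k \<and> (\<forall>u\<in>V. (q, u) \<in> S'))"
  proof
    assume "\<exists>V\<subseteq>tchildren T w. card V = k \<and> (\<forall>u\<in>V. (q, u) \<in> S)"
    then obtain V where "V\<subseteq>tchildren T w" "card V = k" "\<forall>u\<in>V. (q, u) \<in> S" by blast
    then show "\<exists>V\<subseteq>tchildren T w. card V = k \<and> (\<forall>u\<in>V. (q, u) \<in> S')" using h by blast
  next
    assume "\<exists>V\<subseteq>tchildren T w. card V = k \<and> (\<forall>u\<in>V. (q, u) \<in> S')"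
    then obtain V where "V\<subseteq>tchildren T w" "card V = k" "\<forall>u\<in>V. (q, u) \<in> S'" by blast
    then show "\<exists>V\<subseteq>tchildren T w. card V = k \<and> (\<forall>u\<in>V. (q, u) \<in> S)" using h by blast
  qed
  then show ?thesis using Dia by simp
next
  case (Box k q)
  have "\<And>u. u \<in> tchildren T w \<Longrightarrow> (q, u) \<in> S \<longleftrightarrow> (q, u) \<in> S'" using eq Box by (auto simp: tchildren_def)
  then have "{u \<in> tchildren T w. (q, u) \<notin> S} = {u \<in> tchildren T w. (q, u) \<notin> S'}" by blast
  then show ?thesis using Box by simp
next
  case (Up q)
  then show ?thesis using eq butlast_dom[OF wf w] by auto
qed

lemma val_mono:
  assumes wf: "wf_tree T" and w: "w \<in> tdom T" and sub: "S \<subseteq> S'" and v: "val T S w a"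
  shows "val T S' w a"
proof (cases a)
  case (Dia k q)
  then show ?thesis using v sub by auto
next
  case (Box k q)
  have "{u \<in> tchildren T w. (q, u) \<notin> S'} \<subseteq> {u \<in> tchildren T w. (q, u) \<notin> S}" using sub by blast
  then have "card {u \<in> tchildren T w. (q, u) \<notin> S'} \<le> card {u \<in> tchildren T w. (q, u) \<notin> S}"
    by (rule card_mono[rotated]) (use wf_fin[OF wf w] in simp)
  then show ?thesis using v Box by simp
next
  case (Up q)
  then show ?thesis using v sub by auto
qed

lemma nbr_irrefl: "\<not> nbr T u u"
proof
  assume "nbr T u u"
  then have "u \<in> tchildren T u \<or> (u \<noteq> [] \<and> u = butlast u)" by (simp add: nbr_def)
  then show False
  proof
    assume "u \<in> tchildren T u"
    then obtain i where "u = u @ [i]" by (auto simp: tchildren_def)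
    then show False by (metis append_self_conv list.distinct(1))
  next
    assume "u \<noteq> [] \<and> u = butlast u"
    then have "length u = length u - 1" "0 < length u" by (metis length_butlast, simp)
    then show False by linarith
  qed
qed

lemma unfold_bwd:
  fixes A :: "('ap, 'q::countable) hta"
  assumes wf: "wf_tree T" and u: "u \<in> tdom T"
    and p: "pbf_sat (val T (goodS A T) u) (delta A q (tlab T u) (u = []))"
  shows "good A T q u"
proof (rule glue[where P = "{(q,u)}"])
  show "wf_tree T" by fact
  show "(q, u) \<in> {(q, u)}" by simp
next
  fix q' w assume "(q', w) \<in> {(q, u)}"
  then have e: "q' = q" "w = u" by auto
  have "pbf_sat (val T ({(q, u)} \<union> goodS A T) u) (delta A q (tlab T u) (u = []))"
    by (rule pbf_mono[OF _ p]) (erule val_mono[OF wf u, rotated], blast)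
  then show "w \<in> tdom T \<and> pbf_sat (val T ({(q, u)} \<union> goodS A T) w) (delta A q' (tlab T w) (w = []))"
    using e u by simp
next
  fix c :: "nat \<Rightarrow> 'q \<times> nat list"
  assume "\<forall>n. c n \<in> {(q, u)} \<and> nbr T (snd (c n)) (snd (c (Suc n)))"
  then have "c 0 = (q, u)" "c (Suc 0) = (q, u)" "nbr T (snd (c 0)) (snd (c (Suc 0)))" by blast+
  then have "nbr T u u" by simp
  then show "\<forall>m. \<exists>n\<ge>m. fst (c n) \<in> acc A" using nbr_irrefl by blast
qed

lemma unfold_iff:
  fixes A :: "('ap, 'q::countable) hta"
  assumes wf: "wf_tree T" and u: "u \<in> tdom T"
  shows "good A T q u \<longleftrightarrow> pbf_sat (val T (goodS A T) u) (delta A q (tlab T u) (u = []))"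
proof
  assume "good A T q u" then show "pbf_sat (val T (goodS A T) u) (delta A q (tlab T u) (u = []))"
    by (rule unfold_fwd[OF wf])
next
  assume "pbf_sat (val T (goodS A T) u) (delta A q (tlab T u) (u = []))"
  then show "good A T q u" by (rule unfold_bwd[OF wf u])
qed

lemma EU_base: "sat T w \<psi> \<Longrightarrow> sat T w (EU \<phi> \<psi>)"
  by (auto intro!: exI[of _ "\<lambda>_. w"] exI[of _ 0])

lemma EU_prepend:
  assumes c: "c \<in> tchildren T w" and s: "sat T c (EU \<phi> \<psi>)" and w: "sat T w \<phi>"
  shows "sat T w (EU \<phi> \<psi>)"
proof -
  obtain f j where f: "f 0 = c" "\<forall>k<j. f (Suc k) \<in> tchildren T (f k)" "sat T (f j) \<psi>" "\<forall>k<j. sat T (f k) \<phi>"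
    using s by auto
  define g where "g k = (if k = 0 then w else f (k - 1))" for k
  have "g 0 = w" by (simp add: g_def)
  moreover have "\<forall>k<Suc j. g (Suc k) \<in> tchildren T (g k)"
  proof (intro allI impI)
    fix k assume "k < Suc j"
    then show "g (Suc k) \<in> tchildren T (g k)" using f c by (cases k) (auto simp: g_def)
  qed
  moreover have "sat T (g (Suc j)) \<psi>" using f by (simp add: g_def)
  moreover have "\<forall>k<Suc j. sat T (g k) \<phi>"
  proof (intro allI impI)
    fix k assume "k < Suc j"
    then show "sat T (g k) \<phi>" using f w by (cases k) (auto simp: g_def)
  qed
  ultimately show ?thesis by (simp only: sat.simps) blast
qed



lemma valDia1: "val T S u (Dia 1 q) \<longleftrightarrow> (\<exists>c\<in>tchildren T u. (q, c) \<in> S)"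
proof
  assume "val T S u (Dia 1 q)"
  then obtain V where "V \<subseteq> tchildren T u" "card V = 1" "\<forall>c\<in>V. (q, c) \<in> S" by auto
  then show "\<exists>c\<in>tchildren T u. (q, c) \<in> S" by (auto simp: card_1_singleton_iff)
next
  assume "\<exists>c\<in>tchildren T u. (q, c) \<in> S"
  then obtain c where "c \<in> tchildren T u" "(q, c) \<in> S" by blast
  then show "val T S u (Dia 1 q)" by (auto intro!: exI[of _ "{c}"])
qed

lemma valBox1:
  assumes "wf_tree T" "u \<in> tdom T"
  shows "val T S u (Box 1 q) \<longleftrightarrow> (\<forall>c\<in>tchildren T u. (q, c) \<in> S)"
proof -
  have fin: "finite {c \<in> tchildren T u. (q, c) \<notin> S}" using wf_fin[OF assms] by simp
  have "val T S u (Box 1 q) \<longleftrightarrow> card {c \<in> tchildren T u. (q, c) \<notin> S} = 0" by simp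
  also have "\<dots> \<longleftrightarrow> {c \<in> tchildren T u. (q, c) \<notin> S} = {}" using fin by simp
  also have "\<dots> \<longleftrightarrow> (\<forall>c\<in>tchildren T u. (q, c) \<in> S)" by blast
  finally show ?thesis .
qed

lemma take_bl: "u \<noteq> [] \<Longrightarrow> take (length (butlast u) - k) (butlast u) = take (length u - Suc k) u"
proof -
  assume u: "u \<noteq> []"
  have e: "length (butlast u) - k = length u - Suc k" by simp
  have "length u - Suc k < length u" using u by simp
  then show ?thesis unfolding e by (rule take_butlast)
qed

lemma child_dom: "c \<in> tchildren T w \<Longrightarrow> c \<in> tdom T"
  by (simp add: tchildren_def)

lemma main:
  fixes A :: "('ap::finite, 'q::finite) hta"
  assumes lin: "linear_hta A"
  shows "\<exists>\<phi>. \<forall>T u. wf_tree T \<longrightarrow> u \<in> tdom T \<longrightarrow> (good A T q u \<longleftrightarrow> sat T u \<phi>)"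
proof -
  obtain rk :: "'q \<Rightarrow> nat" and tp where rk: "inj rk"
    and rkle: "\<forall>q \<sigma> \<rho>. \<forall>a\<in>pbf_atoms (delta A q \<sigma> \<rho>). rk (atom_state a) \<le> rk q"
    and tok: "\<forall>q. type_ok A q (tp q)"
    and pE: "\<forall>q. tp q = Existential \<longrightarrow> q \<notin> acc A"
    and pU: "\<forall>q. tp q = Universal \<longrightarrow> q \<in> acc A"
    using lin unfolding linear_hta_def by blast
  show ?thesis
  proof (induction "rk q" arbitrary: q rule: less_induct)
    case less
    have "\<forall>q'. \<exists>\<phi>. rk q' < rk q \<longrightarrow> (\<forall>T u. wf_tree T \<longrightarrow> u \<in> tdom T \<longrightarrow> (good A T q' u \<longleftrightarrow> sat T u \<phi>))"
      using less by blast
    then obtain \<Phi> where \<Phi>0: "\<forall>q'. rk q' < rk q \<longrightarrow> (\<forall>T u. wf_tree T \<longrightarrow> u \<in> tdom T \<longrightarrow> (good A T q' u \<longleftrightarrow> sat T u (\<Phi> q')))"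
      by (metis choice)
    have \<Phi>: "good A T q' u \<longleftrightarrow> sat T u (\<Phi> q')" if "rk q' < rk q" "wf_tree T" "u \<in> tdom T" for q' T u
      using \<Phi>0 that by blast
    define V where "V T b u a = (if atom_state a = q then b else val T (goodS A T) u a)" for T :: "'ap stree" and b u a
    define g where "g b = CASE (\<lambda>\<sigma> \<rho>. tr (\<lambda>a. if atom_state a = q then (if b then TT else FF) else af \<Phi> a) (delta A q \<sigma> \<rho>))" for b
    define D where "D T u = delta A q (tlab T u) (u = [])" for T :: "'ap stree" and u
    have lowrk: "rk (atom_state a) < rk q" if "a \<in> pbf_atoms (D T u)" "atom_state a \<noteq> q" for a and T :: "'ap stree" and u
    proof -
      have "rk (atom_state a) \<le> rk q" using rkle that(1) by (auto simp: D_def)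
      moreover have "rk (atom_state a) \<noteq> rk q" using rk that(2) by (metis injD)
      ultimately show ?thesis by simp
    qed
    have gsat: "sat T u (g b) \<longleftrightarrow> pbf_sat (V T b u) (D T u)" if wf: "wf_tree T" and u: "u \<in> tdom T" for T :: "'ap stree" and u b
    proof -
      have "sat T u (g b) \<longleftrightarrow> pbf_sat (\<lambda>a. sat T u (if atom_state a = q then (if b then TT else FF) else af \<Phi> a)) (D T u)"
        by (simp add: g_def sat_CASE sat_tr D_def)
      also have "\<dots> \<longleftrightarrow> pbf_sat (V T b u) (D T u)"
      proof (rule pbf_cong)
        fix a assume a: "a \<in> pbf_atoms (D T u)"
        show "sat T u (if atom_state a = q then (if b then TT else FF) else af \<Phi> a) = V T b u a"
        proof (cases "atom_state a = q")
          case True then show ?thesis by (simp add: V_def)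
        next
          case False
          have lr: "rk (atom_state a) < rk q" using lowrk[OF a False] .
          have "sat T u (af \<Phi> a) = val T (fS \<Phi> T) u a" by (rule af_sat[OF wf u])
          also have "\<dots> = val T (goodS A T) u a"
          proof (rule val_cong[OF wf u])
            fix u' assume "u' \<in> tdom T"
            then show "(atom_state a, u') \<in> fS \<Phi> T \<longleftrightarrow> (atom_state a, u') \<in> goodS A T"
              using \<Phi>[OF lr wf] by (simp add: fS_def goodS_def)
          qed
          finally show ?thesis using False by (simp add: V_def)
        qed
      qed
      finally show ?thesis .
    qed
    have selfv: "pbf_sat (val T (goodS A T) u) (D T u) \<longleftrightarrow> pbf_sat (V T (val T (goodS A T) u sz) u) (D T u)"
      if "\<And>a. a \<in> pbf_atoms (D T u) \<Longrightarrow> atom_state a = q \<Longrightarrow> a = sz" for T :: "'ap stree" and u sz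
      by (rule pbf_cong) (use that in \<open>auto simp: V_def\<close>)
    have Vmono: "pbf_sat (val T S u) (D T u)"
      if p: "pbf_sat (V T b u) (D T u)" and bs: "b \<Longrightarrow> val T S u sz"
        and self: "\<And>a. a \<in> pbf_atoms (D T u) \<Longrightarrow> atom_state a = q \<Longrightarrow> a = sz"
        and sub: "goodS A T \<subseteq> S" and wf: "wf_tree T" and u: "u \<in> tdom T" for T :: "'ap stree" and u S b sz
    proof (rule pbf_mono[OF _ p])
      fix a assume a: "a \<in> pbf_atoms (D T u)" and va: "V T b u a"
      show "val T S u a"
      proof (cases "atom_state a = q")
        case True
        then show ?thesis using va bs self[OF a True] by (simp add: V_def)
      next
        case False
        then have "val T (goodS A T) u a" using va by (simp add: V_def)
        then show ?thesis by (rule val_mono[OF wf u sub])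
      qed
    qed
    have ok: "type_ok A q (tp q)" using tok by blast
    show ?case
    proof (cases "tp q")
      case Transient
      have noself: "atom_state a \<noteq> q" if "a \<in> pbf_atoms (D T u)" for a and T :: "'ap stree" and u
        using ok Transient that by (auto simp: D_def)
      show ?thesis
      proof (intro exI allI impI)
        fix T :: "'ap stree" and u assume wf: "wf_tree T" and u: "u \<in> tdom T"
        have "good A T q u \<longleftrightarrow> pbf_sat (val T (goodS A T) u) (D T u)"
          unfolding D_def by (rule unfold_iff[OF wf u])
        also have "\<dots> \<longleftrightarrow> pbf_sat (V T True u) (D T u)"
          by (rule pbf_cong) (use noself in \<open>auto simp: V_def\<close>)
        also have "\<dots> \<longleftrightarrow> sat T u (g True)" using gsat[OF wf u] by simp
        finally show "good A T q u \<longleftrightarrow> sat T u (g True)" .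
      qed
    next
      case Existential
      have self: "a = Dia 1 q" if "a \<in> pbf_atoms (D T u)" "atom_state a = q" for a and T :: "'ap stree" and u
        using ok Existential that by (auto simp: D_def)
      have qna: "q \<notin> acc A" using pE Existential by blast
      define \<phi> where "\<phi> = EU (g True) (g False)"
      have eb: "\<forall>f u. f 0 = u \<longrightarrow> u \<in> tdom T \<longrightarrow> (\<forall>k<j. f (Suc k) \<in> tchildren T (f k))
          \<longrightarrow> sat T (f j) (g False) \<longrightarrow> (\<forall>k<j. sat T (f k) (g True)) \<longrightarrow> good A T q u"
        if wf: "wf_tree T" for T :: "'ap stree" and j
      proof (induction j)
        case 0
        show ?case
        proof (intro allI impI)
          fix f u assume f0: "f 0 = u" and u: "u \<in> tdom T" and gf: "sat T (f 0) (g False)"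
          have "pbf_sat (V T False u) (D T u)" using gf f0 gsat[OF wf u] by simp
          then have "pbf_sat (val T (goodS A T) u) (D T u)"
            by (rule Vmono[where sz = "Dia 1 q"]) (use self wf u in auto)
          then show "good A T q u" using unfold_bwd[OF wf u] by (simp add: D_def)
        qed
      next
        case (Suc j)
        show ?case
        proof (intro allI impI)
          fix f u assume f0: "f 0 = u" and u: "u \<in> tdom T"
            and st: "\<forall>k<Suc j. f (Suc k) \<in> tchildren T (f k)" and gf: "sat T (f (Suc j)) (g False)"
            and gt: "\<forall>k<Suc j. sat T (f k) (g True)"
          have c1: "f 1 \<in> tchildren T u" using st f0 by auto
          have "good A T q (f 1)"
            using Suc.IH[rule_format, of "\<lambda>k. f (Suc k)" "f 1"] child_dom[OF c1] st gf gt by auto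
          then have vd: "val T (goodS A T) u (Dia 1 q)" using c1 by (auto simp: valDia1 goodS_def)
          have "pbf_sat (V T True u) (D T u)" using gt f0 gsat[OF wf u] by auto
          then have "pbf_sat (val T (goodS A T) u) (D T u)"
            by (rule Vmono[where sz = "Dia 1 q"]) (use self wf u vd in auto)
          then show "good A T q u" using unfold_bwd[OF wf u] by (simp add: D_def)
        qed
      qed
      have ef: "sat T u \<phi>" if wf: "wf_tree T" and gq: "good A T q u" for T :: "'ap stree" and u
      proof (rule ccontr)
        assume nsat: "\<not> sat T u \<phi>"
        obtain R rl where run: "accepting_run (A\<lparr>init := q\<rparr>) T u R rl" using gq good_def by metis
        have isr: "is_run (A\<lparr>init := q\<rparr>) T u R rl" using run by (simp add: accepting_run_def)
        define B where "B = {x \<in> R. fst (rl x) = q \<and> \<not> sat T (snd (rl x)) \<phi>}"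
        have r0: "[] \<in> B" using isr nsat by (auto simp: B_def is_run_def)
        have stepB: "\<exists>y. y \<in> rchildren R x \<and> y \<in> B" if xB: "x \<in> B" for x
        proof (rule ccontr)
          assume nob: "\<not> (\<exists>y. y \<in> rchildren R x \<and> y \<in> B)"
          define w where "w = snd (rl x)"
          have xR: "x \<in> R" and xq: "fst (rl x) = q" and nw: "\<not> sat T w \<phi>" using xB by (auto simp: B_def w_def)
          have wdom: "w \<in> tdom T" using isr xR by (simp add: is_run_def w_def)
          have "pbf_sat (atom_sat T R rl x) (delta A (fst (rl x)) (tlab T (snd (rl x))) (snd (rl x) = []))"
            using isr xR unfolding is_run_def by simp
          then have ps: "pbf_sat (atom_sat T R rl x) (D T w)"
            using xq unfolding D_def w_def by simp
          define b where "b = sat T w (EXn \<phi>)"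
          have pv: "pbf_sat (V T b w) (D T w)"
          proof (rule pbf_mono[OF _ ps])
            fix a assume a_in: "a \<in> pbf_atoms (D T w)" and asat: "atom_sat T R rl x a"
            show "V T b w a"
            proof (cases "atom_state a = q")
              case True
              then have ad: "a = Dia 1 q" using self a_in by blast
              then obtain Vs where Vs: "Vs \<subseteq> tchildren T w" "card Vs = 1" "\<forall>v\<in>Vs. \<exists>y\<in>rchildren R x. rl y = (q, v)"
                using asat by (auto simp: w_def)
              then obtain v where v: "Vs = {v}" by (auto simp: card_1_singleton_iff)
              then obtain y where y: "y \<in> rchildren R x" "rl y = (q, v)" using Vs by auto
              have "y \<in> R" using y by (simp add: rchildren_def)
              moreover have "y \<notin> B" using nob y(1) by blast
              ultimately have "sat T (snd (rl y)) \<phi>" using y(2) unfolding B_def by simp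
              then have "sat T v \<phi>" using y(2) by simp
              moreover have "v \<in> tchildren T w" using Vs v by auto
              ultimately have b using b_def by auto
              then show ?thesis using True by (simp add: V_def)
            next
              case False
              have "val T (goodS A T) w a" using atom_sat_val[OF wf run xR asat] by (simp add: w_def)
              then show ?thesis using False by (simp add: V_def)
            qed
          qed
          show False
          proof (cases b)
            case True
            then have gt: "sat T w (g True)" using pv gsat[OF wf wdom] by simp
            obtain c where "c \<in> tchildren T w" "sat T c \<phi>" using True b_def by auto
            then have "sat T w \<phi>" using EU_prepend gt unfolding \<phi>_def by blast
            then show False using nw by simp
          next
            case False
            then have "sat T w (g False)" using pv gsat[OF wf wdom] by simp
            then have "sat T w \<phi>" unfolding \<phi>_def by (rule EU_base)
            then show False using nw by simp
          qed
        qed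
        define p where "p = rec_nat [] (\<lambda>_ x. SOME y. y \<in> rchildren R x \<and> y \<in> B)"
        have p0: "p 0 = []" by (simp add: p_def)
        have pS: "p (Suc n) = (SOME y. y \<in> rchildren R (p n) \<and> y \<in> B)" for n by (simp add: p_def)
        have pSB: "p (Suc n) \<in> rchildren R (p n) \<and> p (Suc n) \<in> B" if "p n \<in> B" for n
          unfolding pS by (rule someI_ex[OF stepB[OF that]])
        have pB0: "p n \<in> B" for n
        proof (induction n)
          case 0 then show ?case using r0 p0 by simp
        next
          case (Suc n) then show ?case using pSB by blast
        qed
        have pB: "p n \<in> B \<and> p (Suc n) \<in> rchildren R (p n)" for n
          using pB0 pSB by blast
        have "\<forall>m. \<exists>n\<ge>m. fst (rl (p n)) \<in> acc (A\<lparr>init := q\<rparr>)"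
          using run p0 pB unfolding accepting_run_def by blast
        then obtain n where "fst (rl (p n)) \<in> acc A" by auto
        moreover have "fst (rl (p n)) = q" using pB[of n] by (simp add: B_def)
        ultimately show False using qna by simp
      qed
      show ?thesis
      proof (intro exI allI impI)
        fix T :: "'ap stree" and u assume wf: "wf_tree T" and u: "u \<in> tdom T"
        show "good A T q u \<longleftrightarrow> sat T u \<phi>"
        proof
          assume "good A T q u" then show "sat T u \<phi>" using ef wf by blast
        next
          assume "sat T u \<phi>"
          then obtain f j where f: "f 0 = u" "\<forall>k<j. f (Suc k) \<in> tchildren T (f k)"
            "sat T (f j) (g False)" "\<forall>k<j. sat T (f k) (g True)"
            unfolding \<phi>_def by auto
          then show "good A T q u" using eb[OF wf, of j] u by blast
        qed
      qed
    next
      case Universal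
      have self: "a = Box 1 q" if "a \<in> pbf_atoms (D T u)" "atom_state a = q" for a and T :: "'ap stree" and u
        using ok Universal that by (auto simp: D_def)
      have qa: "q \<in> acc A" using pU Universal by blast
      define E where "E = EU (Neg (g False)) (Neg (g True))"
      have uf: "\<not> sat T u E" if wf: "wf_tree T" and gq: "good A T q u" for T :: "'ap stree" and u
      proof
        assume "sat T u E"
        then obtain f j where f: "f 0 = u" "\<forall>k<j. f (Suc k) \<in> tchildren T (f k)"
            "\<not> sat T (f j) (g True)" "\<forall>k<j. \<not> sat T (f k) (g False)"
          unfolding E_def by auto
        have gv: "pbf_sat (V T (val T (goodS A T) w (Box 1 q)) w) (D T w)" if "good A T q w" for w
        proof -
          have "pbf_sat (val T (goodS A T) w) (D T w)" using unfold_fwd[OF wf that] by (simp add: D_def)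
          then show ?thesis using selfv[of T w "Box 1 q"] self by blast
        qed
        have gk: "k \<le> j \<longrightarrow> good A T q (f k)" for k
        proof (induction k)
          case 0 then show ?case using f gq by simp
        next
          case (Suc k)
          show ?case
          proof
            assume sk: "Suc k \<le> j"
            then have g: "good A T q (f k)" using Suc by simp
            have fd: "f k \<in> tdom T" using good_dom[OF g] .
            have b: "val T (goodS A T) (f k) (Box 1 q)"
            proof (rule ccontr)
              assume "\<not> val T (goodS A T) (f k) (Box 1 q)"
              then have "pbf_sat (V T False (f k)) (D T (f k))" using gv[OF g] by simp
              then have "sat T (f k) (g False)" using gsat[OF wf fd] by simp
              then show False using f(4) sk by simp
            qed
            have "f (Suc k) \<in> tchildren T (f k)" using f(2) sk by simp
            moreover have "\<forall>c\<in>tchildren T (f k). (q, c) \<in> goodS A T"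
              using b valBox1[OF wf fd, of "goodS A T" q] by blast
            ultimately have "(q, f (Suc k)) \<in> goodS A T" by blast
            then show "good A T q (f (Suc k))" by (simp add: goodS_def)
          qed
        qed
        have g: "good A T q (f j)" using gk by simp
        have fd: "f j \<in> tdom T" using good_dom[OF g] .
        have "pbf_sat (V T True (f j)) (D T (f j))"
          by (rule pbf_mono[OF _ gv[OF g]]) (auto simp: V_def)
        then have "sat T (f j) (g True)" using gsat[OF wf fd] by simp
        then show False using f(3) by simp
      qed
      have ub: "good A T q u" if wf: "wf_tree T" and u: "u \<in> tdom T" and ns: "\<not> sat T u E" for T :: "'ap stree" and u
      proof (rule glue[where P = "{(q, w) | w. w \<in> tdom T \<and> \<not> sat T w E}"])
        show "wf_tree T" by (rule wf)
        show "(q, u) \<in> {(q, w) | w. w \<in> tdom T \<and> \<not> sat T w E}" using u ns by simp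
      next
        fix c :: "nat \<Rightarrow> 'q \<times> nat list"
        assume chn: "\<forall>n. c n \<in> {(q, w) | w. w \<in> tdom T \<and> \<not> sat T w E} \<and> nbr T (snd (c n)) (snd (c (Suc n)))"
        have cq: "fst (c n) = q" for n using chn[rule_format, of n] by auto
        show "\<forall>m. \<exists>n\<ge>m. fst (c n) \<in> acc A"
        proof
          fix m show "\<exists>n\<ge>m. fst (c n) \<in> acc A" using cq[of m] qa by (intro exI[of _ m]) simp
        qed
      next
        fix q' w assume "(q', w) \<in> {(q, w) | w. w \<in> tdom T \<and> \<not> sat T w E}"
        then have q': "q' = q" and wd: "w \<in> tdom T" and nw: "\<not> sat T w E" by auto
        let ?P = "{(q, w) | w. w \<in> tdom T \<and> \<not> sat T w E}"
        have gt: "sat T w (g True)"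
        proof (rule ccontr)
          assume "\<not> sat T w (g True)"
          then have "sat T w E" unfolding E_def by (intro EU_base) simp
          then show False using nw by simp
        qed
        have "pbf_sat (val T (?P \<union> goodS A T) w) (D T w)"
        proof (cases "sat T w (g False)")
          case True
          then have "pbf_sat (V T False w) (D T w)" using gsat[OF wf wd] by simp
          then show ?thesis by (rule Vmono[where sz = "Box 1 q"]) (use self wf wd in auto)
        next
          case False
          have "\<forall>c\<in>tchildren T w. (q, c) \<in> ?P"
          proof
            fix c assume c: "c \<in> tchildren T w"
            have "\<not> sat T c E"
            proof
              assume "sat T c E"
              then have "sat T w E" unfolding E_def by (rule EU_prepend[OF c]) (use False in simp)
              then show False using nw by simp
            qed
            then show "(q, c) \<in> ?P" using child_dom[OF c] by simp
          qed
          then have "\<forall>c\<in>tchildren T w. (q, c) \<in> ?P \<union> goodS A T" by blast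
          then have vb: "val T (?P \<union> goodS A T) w (Box 1 q)" unfolding valBox1[OF wf wd] .
          have "pbf_sat (V T True w) (D T w)" using gt gsat[OF wf wd] by simp
          then show ?thesis by (rule Vmono[where sz = "Box 1 q"]) (use self wf wd vb in auto)
        qed
        then show "w \<in> tdom T \<and> pbf_sat (val T (?P \<union> goodS A T) w) (delta A q' (tlab T w) (w = []))"
          using wd q' by (simp add: D_def)
      qed
      show ?thesis
      proof (intro exI allI impI)
        fix T :: "'ap stree" and u assume wf: "wf_tree T" and u: "u \<in> tdom T"
        show "good A T q u \<longleftrightarrow> sat T u (Neg E)"
          using uf[OF wf] ub[OF wf u] by auto
      qed
    next
      case Upward
      have self: "a = Up q" if "a \<in> pbf_atoms (D T u)" "atom_state a = q" for a and T :: "'ap stree" and u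
        using ok Upward that by (auto simp: D_def)
      define \<phi> where "\<phi> = ES (g True) (g False)"
      have upf: "\<forall>u. length u = n \<longrightarrow> good A T q u \<longrightarrow> sat T u \<phi>" if wf: "wf_tree T" for T :: "'ap stree" and n
      proof (induction n rule: less_induct)
        case (less n)
        show ?case
        proof (intro allI impI)
          fix u assume ln: "length u = n" and g: "good A T q u"
          have ud: "u \<in> tdom T" using good_dom[OF g] .
          define b where "b = val T (goodS A T) u (Up q)"
          have "pbf_sat (val T (goodS A T) u) (D T u)" using unfold_fwd[OF wf g] by (simp add: D_def)
          then have pv: "pbf_sat (V T b u) (D T u)" using selfv[of T u "Up q"] self b_def by blast
          show "sat T u \<phi>"
          proof (cases b)
            case False
            then have "sat T u (g False)" using pv gsat[OF wf ud] by simp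
            then show ?thesis unfolding \<phi>_def by (auto intro!: exI[of _ 0])
          next
            case True
            then have une: "u \<noteq> []" and gb: "good A T q (butlast u)" by (auto simp: b_def goodS_def)
            have gt: "sat T u (g True)" using True pv gsat[OF wf ud] by simp
            have "0 < length u" using une by simp
            then have lt: "length (butlast u) < n" using ln by simp
            have "sat T (butlast u) \<phi>" using less.IH[OF lt, rule_format, of "butlast u"] gb by simp
            then obtain j where j: "j \<le> length (butlast u)"
              "sat T (take (length (butlast u) - j) (butlast u)) (g False)"
              "\<forall>k<j. sat T (take (length (butlast u) - k) (butlast u)) (g True)"
              unfolding \<phi>_def by auto
            have "length (butlast u) = length u - 1" by simp
            then have "Suc j \<le> length u" using j(1) \<open>0 < length u\<close> by linarith
            moreover have "sat T (take (length u - Suc j) u) (g False)" using j(2) take_bl[OF une] by simp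
            moreover have "\<forall>k<Suc j. sat T (take (length u - k) u) (g True)"
            proof (intro allI impI)
              fix k assume "k < Suc j"
              then show "sat T (take (length u - k) u) (g True)"
                using gt j(3) take_bl[OF une] by (cases k) auto
            qed
            ultimately show ?thesis unfolding \<phi>_def sat.simps by blast
          qed
        qed
      qed
      have upb: "\<forall>u. u \<in> tdom T \<longrightarrow> j \<le> length u \<longrightarrow> sat T (take (length u - j) u) (g False)
          \<longrightarrow> (\<forall>k<j. sat T (take (length u - k) u) (g True)) \<longrightarrow> good A T q u" if wf: "wf_tree T" for T :: "'ap stree" and j
      proof (induction j)
        case 0
        show ?case
        proof (intro allI impI)
          fix u assume u: "u \<in> tdom T" and gf: "sat T (take (length u - 0) u) (g False)"
          have "pbf_sat (V T False u) (D T u)" using gf gsat[OF wf u] by simp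
          then have "pbf_sat (val T (goodS A T) u) (D T u)"
            by (rule Vmono[where sz = "Up q"]) (use self wf u in auto)
          then show "good A T q u" using unfold_bwd[OF wf u] by (simp add: D_def)
        qed
      next
        case (Suc j)
        show ?case
        proof (intro allI impI)
          fix u assume u: "u \<in> tdom T" and jl: "Suc j \<le> length u"
            and gf: "sat T (take (length u - Suc j) u) (g False)"
            and gt: "\<forall>k<Suc j. sat T (take (length u - k) u) (g True)"
          have une: "u \<noteq> []" using jl by auto
          have bd: "butlast u \<in> tdom T" using butlast_dom[OF wf u une] .
          have i1: "j \<le> length (butlast u)" using jl by simp
          have i2: "sat T (take (length (butlast u) - j) (butlast u)) (g False)" using gf take_bl[OF une] by simp
          have i3: "\<forall>k<j. sat T (take (length (butlast u) - k) (butlast u)) (g True)"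
            using gt take_bl[OF une] by auto
          have "good A T q (butlast u)" using Suc.IH bd i1 i2 i3 by blast
          then have vu: "val T (goodS A T) u (Up q)" using une by (simp add: goodS_def)
          have "sat T u (g True)" using gt[rule_format, of 0] by simp
          then have "pbf_sat (V T True u) (D T u)" using gsat[OF wf u] by simp
          then have "pbf_sat (val T (goodS A T) u) (D T u)"
            by (rule Vmono[where sz = "Up q"]) (use self wf u vu in auto)
          then show "good A T q u" using unfold_bwd[OF wf u] by (simp add: D_def)
        qed
      qed
      show ?thesis
      proof (intro exI allI impI)
        fix T :: "'ap stree" and u assume wf: "wf_tree T" and u: "u \<in> tdom T"
        show "good A T q u \<longleftrightarrow> sat T u \<phi>"
        proof
          assume "good A T q u" then show "sat T u \<phi>" using upf[OF wf] by blast
        next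
          assume "sat T u \<phi>"
          then obtain j where "j \<le> length u" "sat T (take (length u - j) u) (g False)"
              "\<forall>k<j. sat T (take (length u - k) u) (g True)" unfolding \<phi>_def by auto
          then show "good A T q u" using upb[OF wf, of j] u by blast
        qed
      qed
    qed
  qed
qed

theorem theorem5p1:
  fixes A :: "('ap :: finite, 'q :: finite) hta"
  assumes "linear_hta A"
  shows "\<exists>\<phi> :: 'ap pctl. hta_lang A = ctl_lang \<phi>"
proof -
  obtain \<phi> where \<phi>: "\<forall>T u. wf_tree T \<longrightarrow> u \<in> tdom T \<longrightarrow> (good A T (init A) u \<longleftrightarrow> sat T u \<phi>)"
    using main[OF assms] by blast
  have "hta_lang A = ctl_lang \<phi>"
  proof (rule set_eqI)
    fix T
    show "T \<in> hta_lang A \<longleftrightarrow> T \<in> ctl_lang \<phi>"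
    proof (cases "wf_tree T")
      case True
      then have r: "[] \<in> tdom T" by (simp add: wf_tree_def)
      have "good A T (init A) [] \<longleftrightarrow> (\<exists>R rl. accepting_run A T [] R rl)"
        by (simp add: good_def)
      then show ?thesis using \<phi> True r by (auto simp: hta_lang_def ctl_lang_def)
    next
      case False
      then show ?thesis by (simp add: hta_lang_def ctl_lang_def)
    qed
  qed
  then show ?thesis by blast
qed

end
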